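(* No tetrahedron $\mathcal T$ admits both a monostable weighting and a mono-unstable weighting: there do not exist $O,O'\in\operatorname{int}\mathcal T$ (equal or not) such that $(\mathcal T,O)$ is monostable and $(\mathcal T,O')$ is mono-unstable.
   Context: A weighted polyhedron is a pair $(\mathcal P,O)$ with $\mathcal P$ a convex polyhedron and $O\in\operatorname{int}\mathcal P$. $(\mathcal P,O)$ is in equilibrium on a face, edge or vertex $X$ if there exists $Q$ in the relative interior of $X$ (a vertex being its own relative interior) such that the plane perpendicular to $[O,Q]$ at $Q$ supports $\mathcal P$; equilibria on faces are stable, on vertices unstable. $(\mathcal P,O)$ is monostable if exactly one face carries an equilibrium, and mono-unstable if exactly one vertex carries an equilibrium. *)

theory Defs
  imports "HOL-Analysis.Analysis"
begin

definition perp_plane_supports :: "(real^3) set \<Rightarrow> real^3 \<Rightarrow> real^3 \<Rightarrow> bool" where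
  "perp_plane_supports P C Q \<longleftrightarrow> Q \<noteq> C \<and> Q \<in> P \<and>
     ((\<forall>x\<in>P. (x - Q) \<bullet> (Q - C) \<le> 0) \<or> (\<forall>x\<in>P. (x - Q) \<bullet> (Q - C) \<ge> 0))"

definition equilibrium_on :: "(real^3) set \<Rightarrow> real^3 \<Rightarrow> (real^3) set \<Rightarrow> bool" where
  "equilibrium_on P C X \<longleftrightarrow> (\<exists>Q\<in>rel_interior X. perp_plane_supports P C Q)"

definition weighted_polyhedron :: "(real^3) set \<Rightarrow> real^3 \<Rightarrow> bool" where
  "weighted_polyhedron P C \<longleftrightarrow> polytope P \<and> aff_dim P = 3 \<and> C \<in> interior P"

definition monostable :: "(real^3) set \<Rightarrow> real^3 \<Rightarrow> bool" where
  "monostable P C \<longleftrightarrow> weighted_polyhedron P C \<and>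
     (\<exists>!F. F face_of P \<and> aff_dim F = 2 \<and> equilibrium_on P C F)"

definition mono_unstable :: "(real^3) set \<Rightarrow> real^3 \<Rightarrow> bool" where
  "mono_unstable P C \<longleftrightarrow> weighted_polyhedron P C \<and>
     (\<exists>!v. v extreme_point_of P \<and> equilibrium_on P C {v})"

end

theory Submission
  imports Defs
begin
unbundle cross3_syntax

definition lam :: "(real^3 \<Rightarrow> real^3) \<Rightarrow> real^3 \<Rightarrow> real^3 \<Rightarrow> real" where
  "lam g y z = 1 + g y \<bullet> (z - y)"

locale tetra =
  fixes V :: "(real^3) set" and g :: "real^3 \<Rightarrow> real^3"
  assumes fin: "finite V" and card4: "card V = 4" and indep: "\<not> affine_dependent V"
  and grad: "\<And>x y. x \<in> V \<Longrightarrow> y \<in> V \<Longrightarrow> g x \<bullet> (y - x) = (if y = x then 0 else -1)"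
  and bsum: "\<And>z. (\<Sum>y\<in>V. lam g y z) = 1"
  and brec: "\<And>z. (\<Sum>y\<in>V. lam g y z *\<^sub>R y) = z"
begin

lemma lam_vert: "x \<in> V \<Longrightarrow> y \<in> V \<Longrightarrow> lam g x y = (if y = x then 1 else 0)"
  using grad[of x y] by (simp add: lam_def)

lemma lam_diff: "lam g y z - lam g y w = g y \<bullet> (z - w)"
  by (simp add: lam_def inner_diff_right)

lemma lam_nonneg: assumes "z \<in> convex hull V" "y \<in> V" shows "lam g y z \<ge> 0"
proof -
  have "convex hull V \<subseteq> {z. g y \<bullet> z \<ge> g y \<bullet> y - 1}"
  proof (rule hull_minimal)
    show "V \<subseteq> {z. g y \<bullet> z \<ge> g y \<bullet> y - 1}"
    proof
      fix x assume "x \<in> V"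
      then have "lam g y x \<ge> 0" using lam_vert[of y x] assms(2) by auto
      then show "x \<in> {z. g y \<bullet> z \<ge> g y \<bullet> y - 1}" by (simp add: lam_def inner_diff_right)
    qed
  qed (rule convex_halfspace_ge)
  then show ?thesis using assms(1) by (auto simp: lam_def inner_diff_right)
qed

lemma lam_facet: assumes "z \<in> convex hull (V - {y})" "y \<in> V" shows "lam g y z = 0"
proof -
  have "convex hull (V - {y}) \<subseteq> {z. g y \<bullet> z = g y \<bullet> y - 1}"
  proof (rule hull_minimal)
    show "V - {y} \<subseteq> {z. g y \<bullet> z = g y \<bullet> y - 1}"
    proof
      fix x assume "x \<in> V - {y}"
      then have "lam g y x = 0" using lam_vert[of y x] assms(2) by auto
      then show "x \<in> {z. g y \<bullet> z = g y \<bullet> y - 1}" by (simp add: lam_def inner_diff_right)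
    qed
  qed (rule convex_hyperplane)
  then show ?thesis using assms(1) by (auto simp: lam_def inner_diff_right)
qed

lemma other: assumes "y \<in> V" obtains x where "x \<in> V" "x \<noteq> y"
proof -
  have "card (V - {y}) = 3" using card4 fin assms by simp
  then have "V - {y} \<noteq> {}" by (metis card.empty zero_neq_numeral)
  then show ?thesis using that by blast
qed

lemma g_nz: assumes "y \<in> V" shows "g y \<noteq> 0"
proof -
  obtain x where "x \<in> V" "x \<noteq> y" using other assms by blast
  then show ?thesis using grad[of y x] assms by auto
qed

lemma lam_pos: assumes "C \<in> interior (convex hull V)" "y \<in> V" shows "lam g y C > 0"
proof (rule ccontr)
  assume "\<not> lam g y C > 0"
  then have le: "lam g y C \<le> 0" by simp
  obtain e where e: "e > 0" "ball C e \<subseteq> convex hull V"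
    using assms(1) by (meson mem_interior)
  define n where "n = norm (g y)"
  have n: "n > 0" using g_nz[OF assms(2)] by (simp add: n_def)
  define p where "p = C - (e / 2 / n) *\<^sub>R g y"
  have "dist C p = e / 2" using n e by (simp add: p_def dist_norm n_def)
  then have "p \<in> convex hull V" using e by auto
  then have "lam g y p \<ge> 0" using lam_nonneg assms(2) by blast
  moreover have "lam g y p - lam g y C = - (e / 2 / n) * (g y \<bullet> g y)"
    by (simp add: lam_diff p_def)
  moreover have "g y \<bullet> g y = n * n" by (simp add: n_def power2_eq_square[symmetric] power2_norm_eq_inner)
  ultimately have "lam g y C \<ge> e / 2 * n" using n by (simp add: field_simps)
  moreover have "e / 2 * n > 0" using e n by simp
  ultimately show False using le by linarith
qed

lemma sum_g: "sum g V = 0"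
proof -
  have "\<And>z. sum g V \<bullet> z = 0"
  proof -
    fix z
    have "(\<Sum>y\<in>V. lam g y z) - (\<Sum>y\<in>V. lam g y 0) = 0" using bsum by simp
    then have "(\<Sum>y\<in>V. lam g y z - lam g y 0) = 0" by (simp add: sum_subtractf)
    then have "(\<Sum>y\<in>V. g y \<bullet> z) = 0" by (simp add: lam_diff)
    then show "sum g V \<bullet> z = 0" by (simp add: inner_sum_left)
  qed
  then show ?thesis by (metis inner_eq_zero_iff)
qed

lemma recon: assumes "b \<in> V" shows "x = (\<Sum>y\<in>V-{b}. (g y \<bullet> x) *\<^sub>R (y - b))"
proof -
  have l: "lam g y (b + x) = g y \<bullet> x" if "y \<in> V - {b}" for y
  proof -
    have "lam g y (b + x) - lam g y b = g y \<bullet> x" by (simp add: lam_diff)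
    moreover have "lam g y b = 0" using lam_vert[of y b] that assms by auto
    ultimately show ?thesis by simp
  qed
  have "(\<Sum>y\<in>V. lam g y (b + x) *\<^sub>R (y - b)) = (\<Sum>y\<in>V. lam g y (b + x) *\<^sub>R y) - (\<Sum>y\<in>V. lam g y (b + x)) *\<^sub>R b"
    by (simp add: scaleR_diff_right sum_subtractf scaleR_sum_left)
  also have "\<dots> = x" using bsum brec by simp
  finally have "x = (\<Sum>y\<in>V. lam g y (b + x) *\<^sub>R (y - b))" by simp
  also have "\<dots> = (\<Sum>y\<in>V-{b}. lam g y (b + x) *\<^sub>R (y - b))"
    using fin assms by (simp add: sum.remove)
  also have "\<dots> = (\<Sum>y\<in>V-{b}. (g y \<bullet> x) *\<^sub>R (y - b))"
    using l by (intro sum.cong) auto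
  finally show ?thesis .
qed

end

lemma arith_key:
  fixes A B Cc P Q R :: real
  assumes h1: "A + Q + P < 0" and h2: "Q + Cc + R < 0" and h3: "R > 0"
    and h4: "Q * Q < A * Cc" and h5: "R * R < B * Cc"
    and h6: "A + B + Cc + 2*P + 2*Q + 2*R > 0"
    and hA: "A \<ge> 0" and hB: "B \<ge> 0" and hC: "Cc \<ge> 0"
  shows "R * P - Q * B > 0" "Q * R - Cc * P > 0" "P * Q - R * A > 0"
proof -
  define q where "q = - Q"
  define p where "p = - P"
  have RR: "R * R > 0" using h3 by simp
  have Cpos: "Cc > 0" using RR h5 hB hC by (metis less_eq_real_def mult_eq_0_iff order_less_le_trans zero_less_mult_iff less_irrefl)
  have q1: "q > R + Cc" using h2 by (simp add: q_def)
  have qpos: "q > 0" using q1 h3 Cpos by linarith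
  have qq: "q * q < A * Cc" using h4 by (simp add: q_def)
  have "q * Cc < q * q" using q1 qpos h3 by (simp add: mult_strict_left_mono)
  then have "q * Cc < A * Cc" using qq by linarith
  then have Aq: "A > q" using Cpos by (simp add: mult_strict_right_mono_neg mult_less_cancel_right)
  have p1: "p > A - q" using h1 by (simp add: p_def q_def)
  have Apos: "A > 0" using Aq qpos by linarith
  have "Cc * p > Cc * (A - q)" using p1 Cpos by (simp add: mult_strict_left_mono)
  moreover have "q * (q - Cc) > q * R" using q1 qpos by (simp add: mult_strict_left_mono)
  ultimately have i: "Cc * p > q * R" using qq by (simp add: algebra_simps)
  show "Q * R - Cc * P > 0" using i by (simp add: p_def q_def algebra_simps)
  have "p * q > (A - q) * q" using p1 qpos by (simp add: mult_strict_right_mono)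
  moreover have "A * (q - R) > A * Cc" using q1 Apos by (simp add: mult_strict_left_mono)
  ultimately have ii: "p * q > R * A" using qq by (simp add: algebra_simps)
  show "P * Q - R * A > 0" using ii by (simp add: p_def q_def algebra_simps)
  have pB: "p < B + R" using h6 h1 h2 by (simp add: p_def)
  have "q * B \<ge> (R + Cc) * B" using q1 hB by (simp add: mult_right_mono)
  moreover have "R * (B + R) > R * p" using pB h3 by (simp add: mult_strict_left_mono)
  ultimately have iii: "q * B > R * p" using h5 by (simp add: algebra_simps)
  show "R * P - Q * B > 0" using iii by (simp add: p_def q_def algebra_simps)
qed

lemma triple_cyc:
  fixes a b c :: "real^3"
  shows "a \<bullet> (b \<times> c) = b \<bullet> (c \<times> a)" "a \<bullet> (b \<times> c) = c \<bullet> (a \<times> b)"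
  by (simp_all add: cross3_simps)

lemma cross_cross_left:
  fixes u v w :: "real^3"
  shows "(u \<times> v) \<times> w = (u \<bullet> w) *\<^sub>R v - (v \<bullet> w) *\<^sub>R u"
  by (simp add: cross3_simps forall_3)

context tetra
begin

lemma cs_strict: assumes "x \<in> V" "y \<in> V" "x \<noteq> y"
  shows "g x \<bullet> g y < norm (g x) * norm (g y)"
proof -
  have le: "g x \<bullet> g y \<le> norm (g x) * norm (g y)" by (rule norm_cauchy_schwarz)
  have "g x \<bullet> g y \<noteq> norm (g x) * norm (g y)"
  proof
    assume "g x \<bullet> g y = norm (g x) * norm (g y)"
    then have eq: "norm (g x) *\<^sub>R g y = norm (g y) *\<^sub>R g x" by (simp add: norm_cauchy_schwarz_eq)
    have "(norm (g x) *\<^sub>R g y) \<bullet> (y - x) = (norm (g y) *\<^sub>R g x) \<bullet> (y - x)" using eq by simp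
    moreover have "g y \<bullet> (y - x) = 1"
    proof -
      have "g y \<bullet> (x - y) = -1" using grad[of y x] assms by auto
      then show ?thesis by (metis inner_minus_right minus_diff_eq neg_equal_iff_equal)
    qed
    moreover have "g x \<bullet> (y - x) = -1" using grad[of x y] assms by auto
    ultimately have "norm (g x) = - norm (g y)" by simp
    moreover have "norm (g x) > 0" "norm (g y) > 0" using g_nz assms by auto
    ultimately show False by linarith
  qed
  then show ?thesis using le by linarith
qed

lemma NS:
  assumes C: "C \<in> interior (convex hull V)" and u: "u \<in> V"
    and ne: "\<not> equilibrium_on (convex hull V) C (convex hull (V - {u}))"
  shows "\<exists>w\<in>V. w \<noteq> u \<and> g u \<bullet> g w > 0 \<and> lam g w C / norm (g w) < lam g u C / norm (g u)"
proof -
  define G where "G = g u"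
  have G0: "G \<noteq> 0" using g_nz u by (simp add: G_def)
  have GG: "G \<bullet> G > 0" using G0 by simp
  have lu: "lam g u C > 0" using lam_pos C u by blast
  define k where "k = lam g u C / (G \<bullet> G)"
  have k: "k > 0" using lu GG by (simp add: k_def)
  define Q where "Q = C - k *\<^sub>R G"
  have lamQ: "lam g y Q = lam g y C - k * (g y \<bullet> G)" for y
  proof -
    have "lam g y Q - lam g y C = g y \<bullet> (Q - C)" by (rule lam_diff)
    then show ?thesis by (simp add: Q_def)
  qed
  have lamuQ: "lam g u Q = 0" using lamQ[of u] GG by (simp add: k_def G_def)
  show ?thesis
  proof (rule ccontr)
    assume H: "\<not> ?thesis"
    have pos: "lam g w Q > 0" if w: "w \<in> V - {u}" for w
    proof (rule ccontr)
      assume "\<not> lam g w Q > 0"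
      then have le1: "lam g w C \<le> k * (g w \<bullet> G)" using lamQ[of w] by simp
      have lw: "lam g w C > 0" using lam_pos C w by blast
      then have "k * (g w \<bullet> G) > 0" using le1 by linarith
      then have dp: "g w \<bullet> G > 0" using k by (simp add: zero_less_mult_iff)
      have nu: "norm G > 0" "norm (g w) > 0" using G0 g_nz w by auto
      have cs: "g w \<bullet> G < norm (g w) * norm G" using cs_strict[of w u] w u by (simp add: G_def)
      have GGn: "G \<bullet> G = norm G * norm G" by (simp add: power2_eq_square[symmetric] power2_norm_eq_inner)
      have "lam g w C < k * (norm (g w) * norm G)" using le1 cs k by (smt (verit) mult_strict_left_mono)
      also have "\<dots> = lam g u C * norm (g w) / norm G" using nu by (simp add: k_def GGn field_simps)
      finally have "lam g w C / norm (g w) < lam g u C / norm G" using nu by (simp add: field_simps)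
      then show False using H w dp by (auto simp: G_def inner_commute)
    qed
    have indep': "\<not> affine_dependent (V - {u})" using indep by (simp add: affine_independent_Diff)
    have s1: "(\<Sum>w\<in>V - {u}. lam g w Q) = 1"
      using bsum[of Q] fin u lamuQ by (simp add: sum.remove)
    have s2: "(\<Sum>w\<in>V - {u}. lam g w Q *\<^sub>R w) = Q"
      using brec[of Q] fin u lamuQ by (simp add: sum.remove)
    have "\<exists>uu. (\<forall>x\<in>V - {u}. 0 < uu x) \<and> sum uu (V - {u}) = 1 \<and> (\<Sum>x\<in>V - {u}. uu x *\<^sub>R x) = Q"
      by (rule exI[of _ "\<lambda>w. lam g w Q"]) (use pos s1 s2 in auto)
    then have Qri: "Q \<in> rel_interior (convex hull (V - {u}))"
      by (simp add: rel_interior_convex_hull_explicit[OF indep'])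
    have "convex hull (V - {u}) \<subseteq> convex hull V" by (rule hull_mono) auto
    then have QT: "Q \<in> convex hull V"
      using Qri rel_interior_subset by blast
    have QC: "Q \<noteq> C"
    proof
      assume "Q = C"
      then have "lam g u C = 0" using lamuQ by simp
      then show False using lu by simp
    qed
    have sup: "\<forall>x\<in>convex hull V. (x - Q) \<bullet> (Q - C) \<le> 0"
    proof
      fix x assume x: "x \<in> convex hull V"
      have "(x - Q) \<bullet> (Q - C) = - k * (G \<bullet> (x - Q))" by (simp add: Q_def inner_commute)
      also have "G \<bullet> (x - Q) = lam g u x" using lam_diff[of u x Q] lamuQ by (simp add: G_def)
      finally show "(x - Q) \<bullet> (Q - C) \<le> 0" using lam_nonneg[OF x u] k by simp
    qed
    have "equilibrium_on (convex hull V) C (convex hull (V - {u}))"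
      unfolding equilibrium_on_def perp_plane_supports_def using Qri QT QC sup by blast
    then show False using ne by blast
  qed
qed

lemma star:
  assumes V: "V = {a,b,c,d}" and dist: "a \<noteq> b" "a \<noteq> c" "a \<noteq> d" "b \<noteq> c" "b \<noteq> d" "c \<noteq> d"
    and o: "g a \<bullet> g b > 0" "g a \<bullet> g c > 0" "g a \<bullet> g d > 0"
  shows False
proof -
  have "g a + g b + g c + g d = 0" using sum_g V dist by (simp add: add.assoc)
  then have "g a = - (g b + g c + g d)" by (metis add.assoc eq_neg_iff_add_eq_0)
  then have "g a \<bullet> g a = - (g a \<bullet> g b + g a \<bullet> g c + g a \<bullet> g d)"
    by (metis inner_add_right inner_minus_right)
  then have "g a \<bullet> g a < 0" using o by linarith
  then show False using inner_ge_zero[of "g a"] by linarith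
qed

end

context tetra
begin

lemma gdot: "x \<in> V \<Longrightarrow> y \<in> V \<Longrightarrow> b \<in> V \<Longrightarrow> g x \<bullet> (y - b) = (if y = x then 1 else 0) - (if b = x then 1 else 0)"
proof -
  assume a: "x \<in> V" "y \<in> V" "b \<in> V"
  have "g x \<bullet> (y - b) = g x \<bullet> (y - x) - g x \<bullet> (b - x)" by (simp add: inner_diff_right)
  then show ?thesis using grad[of x y] grad[of x b] a by auto
qed

lemma acute:
  assumes V: "V = {a,b,c,d}" and dist: "a \<noteq> b" "a \<noteq> c" "a \<noteq> d" "b \<noteq> c" "b \<noteq> d" "c \<noteq> d"
    and o: "g b \<bullet> g a > 0" "g b \<bullet> g c > 0" "g c \<bullet> g d > 0"
  shows "(a - b) \<bullet> (c - b) > 0 \<and> (a - b) \<bullet> (d - b) > 0 \<and> (c - b) \<bullet> (d - b) > 0"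
proof -
  have inV: "a \<in> V" "b \<in> V" "c \<in> V" "d \<in> V" using V by auto
  have Vb: "V - {b} = {a, c, d}" using V dist by auto
  have rec: "x = (g a \<bullet> x) *\<^sub>R (a - b) + (g c \<bullet> x) *\<^sub>R (c - b) + (g d \<bullet> x) *\<^sub>R (d - b)" for x
  proof -
    have e: "(\<Sum>y\<in>V-{b}. (g y \<bullet> x) *\<^sub>R (y - b)) = (g a \<bullet> x) *\<^sub>R (a - b) + (g c \<bullet> x) *\<^sub>R (c - b) + (g d \<bullet> x) *\<^sub>R (d - b)"
      unfolding Vb using dist by (simp add: add.assoc)
    show ?thesis using recon[OF inV(2), of x] e by (rule trans)
  qed
  define D where "D = g a \<bullet> (g c \<times> g d)"
  have ea: "g c \<times> g d = D *\<^sub>R (a - b)"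
  proof -
    have "g c \<times> g d = (g a \<bullet> (g c \<times> g d)) *\<^sub>R (a - b) + (g c \<bullet> (g c \<times> g d)) *\<^sub>R (c - b) + (g d \<bullet> (g c \<times> g d)) *\<^sub>R (d - b)"
      by (rule rec)
    also have "\<dots> = D *\<^sub>R (a - b)" by (simp add: D_def dot_cross_self)
    finally show ?thesis .
  qed
  have ec: "g d \<times> g a = D *\<^sub>R (c - b)"
  proof -
    have "g d \<times> g a = (g a \<bullet> (g d \<times> g a)) *\<^sub>R (a - b) + (g c \<bullet> (g d \<times> g a)) *\<^sub>R (c - b) + (g d \<bullet> (g d \<times> g a)) *\<^sub>R (d - b)"
      by (rule rec)
    also have "\<dots> = D *\<^sub>R (c - b)"
    proof -
      have "g c \<bullet> (g d \<times> g a) = D" unfolding D_def by (rule triple_cyc(1)[symmetric])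
      then show ?thesis by (simp add: dot_cross_self)
    qed
    finally show ?thesis .
  qed
  have ed: "g a \<times> g c = D *\<^sub>R (d - b)"
  proof -
    have "g a \<times> g c = (g a \<bullet> (g a \<times> g c)) *\<^sub>R (a - b) + (g c \<bullet> (g a \<times> g c)) *\<^sub>R (c - b) + (g d \<bullet> (g a \<times> g c)) *\<^sub>R (d - b)"
      by (rule rec)
    also have "\<dots> = D *\<^sub>R (d - b)"
    proof -
      have "g d \<bullet> (g a \<times> g c) = D" unfolding D_def by (rule triple_cyc(2)[symmetric])
      then show ?thesis by (simp add: dot_cross_self)
    qed
    finally show ?thesis .
  qed
  have D0: "D \<noteq> 0"
  proof
    assume "D = 0"
    then have z: "g c \<times> g d = 0" using ea by simp
    have "(g c \<times> g d) \<times> (c - b) = (g c \<bullet> (c - b)) *\<^sub>R g d - (g d \<bullet> (c - b)) *\<^sub>R g c"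
      by (rule cross_cross_left)
    moreover have "g c \<bullet> (c - b) = 1" "g d \<bullet> (c - b) = 0" using gdot inV dist by auto
    ultimately have "g d = 0" using z by simp
    then show False using g_nz inV by auto
  qed
  have sg: "g a + g b + g c + g d = 0" using sum_g V dist by (simp add: add.assoc)
  have gb: "g b = - (g a + g c + g d)"
  proof -
    have "g b = g b - (g a + g b + g c + g d)" using sg by simp
    also have "\<dots> = - (g a + g c + g d)" by (simp add: algebra_simps)
    finally show ?thesis .
  qed
  define A where "A = g a \<bullet> g a"
  define B where "B = g d \<bullet> g d"
  define Cc where "Cc = g c \<bullet> g c"
  define P where "P = g a \<bullet> g d"
  define Q where "Q = g a \<bullet> g c"
  define R where "R = g d \<bullet> g c"
  have h1: "A + Q + P < 0" using o(1) unfolding gb A_def Q_def P_def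
    by (simp add: inner_add_left inner_add_right inner_diff_left inner_diff_right inner_commute)
  have h2: "Q + Cc + R < 0" using o(2) unfolding gb Cc_def Q_def R_def
    by (simp add: inner_add_left inner_add_right inner_diff_left inner_diff_right inner_commute)
  have h3: "R > 0" using o(3) by (simp add: R_def inner_commute)
  have n1: "(g a \<times> g c) \<bullet> (g a \<times> g c) = A * Cc - Q * Q"
    by (simp add: dot_cross A_def Cc_def Q_def inner_commute)
  have n2: "(g c \<times> g d) \<bullet> (g c \<times> g d) = B * Cc - R * R"
    by (simp add: dot_cross B_def Cc_def R_def inner_commute)
  have "g a \<times> g c \<noteq> 0" using ed D0 dist by simp
  then have h4: "Q * Q < A * Cc" using n1 by (metis diff_gt_0_iff_gt inner_gt_zero_iff)
  have "g c \<times> g d \<noteq> 0" using ea D0 dist by simp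
  then have h5: "R * R < B * Cc" using n2 by (metis diff_gt_0_iff_gt inner_gt_zero_iff)
  have "g a + g c + g d \<noteq> 0"
  proof
    assume "g a + g c + g d = 0"
    then have "g b = 0" using gb by simp
    then show False using g_nz inV by auto
  qed
  then have ss: "(g a + g c + g d) \<bullet> (g a + g c + g d) > 0" by simp
  have e6: "(g a + g c + g d) \<bullet> (g a + g c + g d) = A + B + Cc + 2*P + 2*Q + 2*R"
    unfolding A_def B_def Cc_def P_def Q_def R_def
    by (simp add: inner_add_left inner_add_right inner_commute algebra_simps)
  have h6: "A + B + Cc + 2*P + 2*Q + 2*R > 0" using ss e6 by simp
  have hA: "A \<ge> 0" "B \<ge> 0" "Cc \<ge> 0" by (simp_all add: A_def B_def Cc_def)
  note ak = arith_key[OF h1 h2 h3 h4 h5 h6 hA]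
  have DD: "D * D > 0" using D0 by (cases "D > 0") (auto simp: mult_neg_neg)
  have "(D * D) * ((a - b) \<bullet> (c - b)) = (g c \<times> g d) \<bullet> (g d \<times> g a)" using ea ec by simp
  also have "\<dots> = R * P - Q * B" by (simp add: dot_cross R_def P_def Q_def B_def inner_commute)
  finally have r1: "(D * D) * ((a - b) \<bullet> (c - b)) = R * P - Q * B" .
  have "(D * D) * ((a - b) \<bullet> (d - b)) = (g c \<times> g d) \<bullet> (g a \<times> g c)" using ea ed by simp
  also have "\<dots> = Q * R - Cc * P" by (simp add: dot_cross R_def P_def Q_def Cc_def inner_commute)
  finally have r2: "(D * D) * ((a - b) \<bullet> (d - b)) = Q * R - Cc * P" .
  have "(D * D) * ((c - b) \<bullet> (d - b)) = (g d \<times> g a) \<bullet> (g a \<times> g c)" using ec ed by simp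
  also have "\<dots> = P * Q - R * A" by (simp add: dot_cross R_def P_def Q_def A_def inner_commute)
  finally have r3: "(D * D) * ((c - b) \<bullet> (d - b)) = P * Q - R * A" .
  show ?thesis using r1 r2 r3 ak DD by (metis zero_less_mult_pos)
qed

end

lemma comb:
  fixes Ob :: "'a \<Rightarrow> 'a \<Rightarrow> bool" and h :: "'a \<Rightarrow> real"
  assumes dist: "r \<noteq> x" "r \<noteq> y" "r \<noteq> z" "x \<noteq> y" "x \<noteq> z" "y \<noteq> z"
    and sym: "\<And>p q. Ob p q \<Longrightarrow> Ob q p"
    and dx: "\<exists>w\<in>{r,x,y,z}. w \<noteq> x \<and> Ob x w \<and> h w < h x"
    and dy: "\<exists>w\<in>{r,x,y,z}. w \<noteq> y \<and> Ob y w \<and> h w < h y"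
    and dz: "\<exists>w\<in>{r,x,y,z}. w \<noteq> z \<and> Ob z w \<and> h w < h z"
  shows "(\<exists>a b c d. a \<in> {r,x,y,z} \<and> b \<in> {r,x,y,z} \<and> c \<in> {r,x,y,z} \<and> d \<in> {r,x,y,z} \<and>
           a \<noteq> b \<and> a \<noteq> c \<and> a \<noteq> d \<and> b \<noteq> c \<and> b \<noteq> d \<and> c \<noteq> d \<and> Ob a b \<and> Ob a c \<and> Ob a d) \<or>
         (\<exists>a b c d. a \<in> {r,x,y,z} \<and> b \<in> {r,x,y,z} \<and> c \<in> {r,x,y,z} \<and> d \<in> {r,x,y,z} \<and>
           a \<noteq> b \<and> a \<noteq> c \<and> a \<noteq> d \<and> b \<noteq> c \<and> b \<noteq> d \<and> c \<noteq> d \<and> Ob b a \<and> Ob b c \<and> Ob c d)"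
proof -
  obtain wx where wx: "wx \<in> {r,y,z}" "Ob x wx" "h wx < h x" using dx by blast
  obtain wy where wy: "wy \<in> {r,x,z}" "Ob y wy" "h wy < h y" using dy by blast
  obtain wz where wz: "wz \<in> {r,x,y}" "Ob z wz" "h wz < h z" using dz by blast
  have dist': "x \<noteq> r" "y \<noteq> r" "z \<noteq> r" "y \<noteq> x" "z \<noteq> x" "z \<noteq> y" using dist by auto
  show ?thesis
  proof -
    consider "wx = r" | "wx = y" | "wx = z" using wx(1) by blast
    then show ?thesis
    proof cases
      case 1
      then have hx: "wx = r" .
      consider "wy = r" | "wy = x" | "wy = z" using wy(1) by blast
      then show ?thesis
      proof cases
        case 1
        then have hy: "wy = r" .
        consider "wz = r" | "wz = x" | "wz = y" using wz(1) by blast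
        then show ?thesis
        proof cases
          case 1
          then have hz: "wz = r" .
          show ?thesis by (rule disjI1, rule exI[of _ r], rule exI[of _ x], rule exI[of _ y], rule exI[of _ z]) (use wx(2) wy(2) wz(2) hx hy hz dist dist' sym in auto)
        next
          case 2
          then have hz: "wz = x" .
          show ?thesis by (rule disjI2, rule exI[of _ y], rule exI[of _ r], rule exI[of _ x], rule exI[of _ z]) (use wx(2) wy(2) wz(2) hx hy hz dist dist' sym in auto)
        next
          case 3
          then have hz: "wz = y" .
          show ?thesis by (rule disjI2, rule exI[of _ x], rule exI[of _ r], rule exI[of _ y], rule exI[of _ z]) (use wx(2) wy(2) wz(2) hx hy hz dist dist' sym in auto)
        qed
      next
        case 2
        then have hy: "wy = x" .
        consider "wz = r" | "wz = x" | "wz = y" using wz(1) by blast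
        then show ?thesis
        proof cases
          case 1
          then have hz: "wz = r" .
          show ?thesis by (rule disjI2, rule exI[of _ y], rule exI[of _ x], rule exI[of _ r], rule exI[of _ z]) (use wx(2) wy(2) wz(2) hx hy hz dist dist' sym in auto)
        next
          case 2
          then have hz: "wz = x" .
          show ?thesis by (rule disjI1, rule exI[of _ x], rule exI[of _ r], rule exI[of _ y], rule exI[of _ z]) (use wx(2) wy(2) wz(2) hx hy hz dist dist' sym in auto)
        next
          case 3
          then have hz: "wz = y" .
          show ?thesis by (rule disjI2, rule exI[of _ r], rule exI[of _ x], rule exI[of _ y], rule exI[of _ z]) (use wx(2) wy(2) wz(2) hx hy hz dist dist' sym in auto)
        qed
      next
        case 3
        then have hy: "wy = z" .
        consider "wz = r" | "wz = x" | "wz = y" using wz(1) by blast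
        then show ?thesis
        proof cases
          case 1
          then have hz: "wz = r" .
          show ?thesis by (rule disjI2, rule exI[of _ x], rule exI[of _ r], rule exI[of _ z], rule exI[of _ y]) (use wx(2) wy(2) wz(2) hx hy hz dist dist' sym in auto)
        next
          case 2
          then have hz: "wz = x" .
          show ?thesis by (rule disjI2, rule exI[of _ r], rule exI[of _ x], rule exI[of _ z], rule exI[of _ y]) (use wx(2) wy(2) wz(2) hx hy hz dist dist' sym in auto)
        next
          case 3
          then have hz: "wz = y" .
          show ?thesis using wx(3) wy(3) wz(3) unfolding hx hy hz by linarith
        qed
      qed
    next
      case 2
      then have hx: "wx = y" .
      consider "wy = r" | "wy = x" | "wy = z" using wy(1) by blast
      then show ?thesis
      proof cases
        case 1
        then have hy: "wy = r" .
        consider "wz = r" | "wz = x" | "wz = y" using wz(1) by blast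
        then show ?thesis
        proof cases
          case 1
          then have hz: "wz = r" .
          show ?thesis by (rule disjI2, rule exI[of _ x], rule exI[of _ y], rule exI[of _ r], rule exI[of _ z]) (use wx(2) wy(2) wz(2) hx hy hz dist dist' sym in auto)
        next
          case 2
          then have hz: "wz = x" .
          show ?thesis by (rule disjI2, rule exI[of _ r], rule exI[of _ y], rule exI[of _ x], rule exI[of _ z]) (use wx(2) wy(2) wz(2) hx hy hz dist dist' sym in auto)
        next
          case 3
          then have hz: "wz = y" .
          show ?thesis by (rule disjI1, rule exI[of _ y], rule exI[of _ r], rule exI[of _ x], rule exI[of _ z]) (use wx(2) wy(2) wz(2) hx hy hz dist dist' sym in auto)
        qed
      next
        case 2
        then have hy: "wy = x" .
        consider "wz = r" | "wz = x" | "wz = y" using wz(1) by blast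
        then show ?thesis
        proof cases
          case 1
          then have hz: "wz = r" .
          show ?thesis using wx(3) wy(3) wz(3) unfolding hx hy hz by linarith
        next
          case 2
          then have hz: "wz = x" .
          show ?thesis using wx(3) wy(3) wz(3) unfolding hx hy hz by linarith
        next
          case 3
          then have hz: "wz = y" .
          show ?thesis using wx(3) wy(3) wz(3) unfolding hx hy hz by linarith
        qed
      next
        case 3
        then have hy: "wy = z" .
        consider "wz = r" | "wz = x" | "wz = y" using wz(1) by blast
        then show ?thesis
        proof cases
          case 1
          then have hz: "wz = r" .
          show ?thesis by (rule disjI2, rule exI[of _ r], rule exI[of _ z], rule exI[of _ y], rule exI[of _ x]) (use wx(2) wy(2) wz(2) hx hy hz dist dist' sym in auto)
        next
          case 2
          then have hz: "wz = x" .
          show ?thesis using wx(3) wy(3) wz(3) unfolding hx hy hz by linarith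
        next
          case 3
          then have hz: "wz = y" .
          show ?thesis using wx(3) wy(3) wz(3) unfolding hx hy hz by linarith
        qed
      qed
    next
      case 3
      then have hx: "wx = z" .
      consider "wy = r" | "wy = x" | "wy = z" using wy(1) by blast
      then show ?thesis
      proof cases
        case 1
        then have hy: "wy = r" .
        consider "wz = r" | "wz = x" | "wz = y" using wz(1) by blast
        then show ?thesis
        proof cases
          case 1
          then have hz: "wz = r" .
          show ?thesis by (rule disjI2, rule exI[of _ x], rule exI[of _ z], rule exI[of _ r], rule exI[of _ y]) (use wx(2) wy(2) wz(2) hx hy hz dist dist' sym in auto)
        next
          case 2
          then have hz: "wz = x" .
          show ?thesis using wx(3) wy(3) wz(3) unfolding hx hy hz by linarith
        next
          case 3
          then have hz: "wz = y" .
          show ?thesis by (rule disjI2, rule exI[of _ r], rule exI[of _ y], rule exI[of _ z], rule exI[of _ x]) (use wx(2) wy(2) wz(2) hx hy hz dist dist' sym in auto)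
        qed
      next
        case 2
        then have hy: "wy = x" .
        consider "wz = r" | "wz = x" | "wz = y" using wz(1) by blast
        then show ?thesis
        proof cases
          case 1
          then have hz: "wz = r" .
          show ?thesis by (rule disjI2, rule exI[of _ r], rule exI[of _ z], rule exI[of _ x], rule exI[of _ y]) (use wx(2) wy(2) wz(2) hx hy hz dist dist' sym in auto)
        next
          case 2
          then have hz: "wz = x" .
          show ?thesis using wx(3) wy(3) wz(3) unfolding hx hy hz by linarith
        next
          case 3
          then have hz: "wz = y" .
          show ?thesis using wx(3) wy(3) wz(3) unfolding hx hy hz by linarith
        qed
      next
        case 3
        then have hy: "wy = z" .
        consider "wz = r" | "wz = x" | "wz = y" using wz(1) by blast
        then show ?thesis
        proof cases
          case 1
          then have hz: "wz = r" .
          show ?thesis by (rule disjI1, rule exI[of _ z], rule exI[of _ r], rule exI[of _ x], rule exI[of _ y]) (use wx(2) wy(2) wz(2) hx hy hz dist dist' sym in auto)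
        next
          case 2
          then have hz: "wz = x" .
          show ?thesis using wx(3) wy(3) wz(3) unfolding hx hy hz by linarith
        next
          case 3
          then have hz: "wz = y" .
          show ?thesis using wx(3) wy(3) wz(3) unfolding hx hy hz by linarith
        qed
      qed
    qed
  qed
qed

lemma ident_I:
  fixes x e2 e3 e4 :: "real^3"
  shows "(e2 \<bullet> (e3 \<times> e4)) *\<^sub>R x = (x \<bullet> (e3 \<times> e4)) *\<^sub>R e2 + (x \<bullet> (e4 \<times> e2)) *\<^sub>R e3 + (x \<bullet> (e2 \<times> e3)) *\<^sub>R e4"
  by (simp add: cross3_simps forall_3)

lemma triple_cyc':
  fixes a b c :: "real^3"
  shows "a \<bullet> (b \<times> c) = b \<bullet> (c \<times> a)" "a \<bullet> (b \<times> c) = c \<bullet> (a \<times> b)"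
  by (simp_all add: cross3_simps)

lemma dep3:
  fixes p1 p2 p3 p4 :: "real^3"
  assumes dist: "p1 \<noteq> p2" "p1 \<noteq> p3" "p1 \<noteq> p4" "p2 \<noteq> p3" "p2 \<noteq> p4" "p3 \<noteq> p4"
    and eq: "\<alpha> *\<^sub>R (p2 - p1) + \<beta> *\<^sub>R (p3 - p1) + \<gamma> *\<^sub>R (p4 - p1) = 0"
    and nz: "\<alpha> \<noteq> 0 \<or> \<beta> \<noteq> 0 \<or> \<gamma> \<noteq> 0"
  shows "affine_dependent {p1,p2,p3,p4}"
proof -
  define U where "U v = (if v = p2 then \<alpha> else if v = p3 then \<beta> else if v = p4 then \<gamma> else -(\<alpha>+\<beta>+\<gamma>))" for v
  have s1: "sum U {p1,p2,p3,p4} = 0" using dist by (simp add: U_def)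
  have s2: "\<exists>v\<in>{p1,p2,p3,p4}. U v \<noteq> 0" using nz dist by (auto simp: U_def)
  have "(\<Sum>v\<in>{p1,p2,p3,p4}. U v *\<^sub>R v) = -(\<alpha>+\<beta>+\<gamma>) *\<^sub>R p1 + (\<alpha> *\<^sub>R p2 + (\<beta> *\<^sub>R p3 + \<gamma> *\<^sub>R p4))"
    using dist by (simp add: U_def)
  also have "\<dots> = \<alpha> *\<^sub>R (p2 - p1) + \<beta> *\<^sub>R (p3 - p1) + \<gamma> *\<^sub>R (p4 - p1)" by (simp add: algebra_simps)
  finally have s3: "(\<Sum>v\<in>{p1,p2,p3,p4}. U v *\<^sub>R v) = 0" using eq by simp
  show ?thesis
    unfolding affine_dependent_explicit_finite[OF finite.insertI[OF finite.insertI[OF finite.insertI[OF finite.insertI[OF finite.emptyI]]]]]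
    using s1 s2 s3 by blast
qed

lemma D_nz:
  fixes p1 p2 p3 p4 :: "real^3"
  assumes dist: "p1 \<noteq> p2" "p1 \<noteq> p3" "p1 \<noteq> p4" "p2 \<noteq> p3" "p2 \<noteq> p4" "p3 \<noteq> p4"
    and indep: "\<not> affine_dependent {p1,p2,p3,p4}"
  shows "(p2 - p1) \<bullet> ((p3 - p1) \<times> (p4 - p1)) \<noteq> 0"
proof
  assume D0: "(p2 - p1) \<bullet> ((p3 - p1) \<times> (p4 - p1)) = 0"
  define A where "A = (p3 - p1) \<times> (p4 - p1)"
  define B where "B = (p4 - p1) \<times> (p2 - p1)"
  define Cc where "Cc = (p2 - p1) \<times> (p3 - p1)"
  have I: "(x \<bullet> A) *\<^sub>R (p2 - p1) + (x \<bullet> B) *\<^sub>R (p3 - p1) + (x \<bullet> Cc) *\<^sub>R (p4 - p1) = 0" for x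
    using ident_I[of "p2 - p1" "p3 - p1" "p4 - p1" x] D0 by (simp add: A_def B_def Cc_def)
  show False
  proof (cases "A = 0")
    case True
    then have "collinear {0, p3 - p1, p4 - p1}" by (simp add: A_def cross_eq_0)
    then have "p3 - p1 = 0 \<or> p4 - p1 = 0 \<or> (\<exists>c. p4 - p1 = c *\<^sub>R (p3 - p1))" by (simp add: collinear_lemma)
    moreover have "p3 - p1 \<noteq> 0" "p4 - p1 \<noteq> 0" using dist by auto
    ultimately obtain c where c: "p4 - p1 = c *\<^sub>R (p3 - p1)" by blast
    have "0 *\<^sub>R (p2 - p1) + c *\<^sub>R (p3 - p1) + (-1) *\<^sub>R (p4 - p1) = 0" using c by simp
    then have "affine_dependent {p1,p2,p3,p4}" by (rule dep3[OF dist]) simp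
    then show False using indep by simp
  next
    case False
    then have "A \<bullet> A \<noteq> 0" by simp
    then have "affine_dependent {p1,p2,p3,p4}" using I[of A] by (intro dep3[OF dist]) auto
    then show False using indep by simp
  qed
qed

lemma tetra_exists:
  fixes p1 p2 p3 p4 :: "real^3"
  assumes dist: "p1 \<noteq> p2" "p1 \<noteq> p3" "p1 \<noteq> p4" "p2 \<noteq> p3" "p2 \<noteq> p4" "p3 \<noteq> p4"
    and indep: "\<not> affine_dependent {p1,p2,p3,p4}"
  shows "\<exists>g. tetra {p1,p2,p3,p4} g"
proof -
  define V where "V = {p1,p2,p3,p4}"
  define e2 where "e2 = p2 - p1"
  define e3 where "e3 = p3 - p1"
  define e4 where "e4 = p4 - p1"
  define A where "A = e3 \<times> e4"
  define B where "B = e4 \<times> e2"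
  define Cc where "Cc = e2 \<times> e3"
  define D where "D = e2 \<bullet> A"
  have D0: "D \<noteq> 0" using D_nz[OF dist indep] by (simp add: D_def A_def e2_def e3_def e4_def)
  have f: "A \<bullet> e2 = D" "A \<bullet> e3 = 0" "A \<bullet> e4 = 0"
          "B \<bullet> e2 = 0" "B \<bullet> e3 = D" "B \<bullet> e4 = 0"
          "Cc \<bullet> e2 = 0" "Cc \<bullet> e3 = 0" "Cc \<bullet> e4 = D"
    unfolding D_def A_def B_def Cc_def
    by (simp_all add: cross3_simps)
  define g where "g x = (if x = p2 then (1/D) *\<^sub>R A else if x = p3 then (1/D) *\<^sub>R B
      else if x = p4 then (1/D) *\<^sub>R Cc else - ((1/D) *\<^sub>R (A + B + Cc)))" for x
  have ee: "p2 - p1 = e2" "p3 - p1 = e3" "p4 - p1 = e4" by (simp_all add: e2_def e3_def e4_def)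
  have gp: "g x \<bullet> (y - p1) = (if y = x then 1 else 0) - (if x = p1 then 1 else 0)"
    if "x \<in> V" "y \<in> V" for x y
    using that dist D0 unfolding V_def
    by (auto simp: g_def ee f inner_add_left inner_minus_left)
  have grad: "g x \<bullet> (y - x) = (if y = x then 0 else -1)" if "x \<in> V" "y \<in> V" for x y
  proof -
    have "g x \<bullet> (y - x) = g x \<bullet> (y - p1) - g x \<bullet> (x - p1)"
      by (metis diff_diff_eq2 inner_diff_right diff_add_cancel add_diff_cancel_right' diff_diff_add)
    then show ?thesis using gp[OF that] gp[OF that(1) that(1)] by auto
  qed
  have sg: "sum g V = 0"
    unfolding V_def using dist by (simp add: g_def algebra_simps)
  have lamf: "lam g y z = g y \<bullet> (z - p1) + (if y = p1 then 1 else 0)" if "y \<in> V" for y z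
  proof -
    have "lam g y z = 1 + (g y \<bullet> (z - p1) - g y \<bullet> (y - p1))"
      by (simp add: lam_def inner_diff_right)
    then show ?thesis using gp[OF that that] by auto
  qed
  have bsum: "(\<Sum>y\<in>V. lam g y z) = 1" for z
  proof -
    have "(\<Sum>y\<in>V. lam g y z) = (\<Sum>y\<in>V. g y \<bullet> (z - p1) + (if y = p1 then 1 else 0))"
      using lamf by (intro sum.cong) auto
    also have "\<dots> = sum g V \<bullet> (z - p1) + 1"
      unfolding V_def using dist by (simp add: sum.distrib inner_add_left)
    finally show ?thesis using sg by simp
  qed
  have brec: "(\<Sum>y\<in>V. lam g y z *\<^sub>R y) = z" for z
  proof -
    define w where "w = z - p1"
    have "(\<Sum>y\<in>V. lam g y z *\<^sub>R y) = (\<Sum>y\<in>V. lam g y z *\<^sub>R (y - p1)) + (\<Sum>y\<in>V. lam g y z) *\<^sub>R p1"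
      by (simp add: scaleR_diff_right sum_subtractf scaleR_sum_left)
    also have "(\<Sum>y\<in>V. lam g y z *\<^sub>R (y - p1)) = (g p2 \<bullet> w) *\<^sub>R e2 + (g p3 \<bullet> w) *\<^sub>R e3 + (g p4 \<bullet> w) *\<^sub>R e4"
      unfolding V_def using dist lamf[unfolded V_def] by (simp add: ee w_def add.assoc)
    also have "\<dots> = (1/D) *\<^sub>R ((w \<bullet> A) *\<^sub>R e2 + (w \<bullet> B) *\<^sub>R e3 + (w \<bullet> Cc) *\<^sub>R e4)"
      using dist by (simp add: g_def inner_commute scaleR_add_right)
    also have "(w \<bullet> A) *\<^sub>R e2 + (w \<bullet> B) *\<^sub>R e3 + (w \<bullet> Cc) *\<^sub>R e4 = D *\<^sub>R w"
      using ident_I[of e2 e3 e4 w] by (simp add: D_def A_def B_def Cc_def)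
    finally show ?thesis using bsum[of z] D0 by (simp add: w_def)
  qed
  have "tetra V g"
  proof
    show "finite V" by (simp add: V_def)
    show "card V = 4" using dist by (simp add: V_def)
    show "\<not> affine_dependent V" using indep by (simp add: V_def)
  qed (use grad bsum brec in auto)
  then show ?thesis unfolding V_def by blast
qed

lemma unstable_obtuse:
  fixes V :: "(real^3) set"
  assumes indep: "\<not> affine_dependent V" and mu: "mono_unstable (convex hull V) C'"
  shows "\<exists>v0. \<forall>u\<in>V. u \<noteq> v0 \<longrightarrow> (\<exists>y\<in>V. \<exists>z\<in>V. y \<noteq> u \<and> z \<noteq> u \<and> (y - u) \<bullet> (z - u) < 0)"
proof -
  have Ci: "C' \<in> interior (convex hull V)" using mu by (simp add: mono_unstable_def weighted_polyhedron_def)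
  then have CT: "C' \<in> convex hull V" using interior_subset by blast
  obtain v0 where v0: "\<And>v. v extreme_point_of (convex hull V) \<and> equilibrium_on (convex hull V) C' {v} \<Longrightarrow> v = v0"
    using mu unfolding mono_unstable_def by metis
  have "\<forall>u\<in>V. u \<noteq> v0 \<longrightarrow> (\<exists>y\<in>V. \<exists>z\<in>V. y \<noteq> u \<and> z \<noteq> u \<and> (y - u) \<bullet> (z - u) < 0)"
  proof (intro ballI impI)
    fix u assume u: "u \<in> V" "u \<noteq> v0"
    have ext: "u extreme_point_of (convex hull V)"
      using extreme_point_of_convex_hull_affine_independent[OF indep] u by simp
    then have ne: "\<not> equilibrium_on (convex hull V) C' {u}" using v0 u by blast
    have uC: "u \<noteq> C'" using extreme_point_not_in_interior[OF ext] Ci by blast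
    have uT: "u \<in> convex hull V" using u by (simp add: hull_inc)
    have "\<not> perp_plane_supports (convex hull V) C' u" using ne by (simp add: equilibrium_on_def)
    then have "\<not> (\<forall>x\<in>convex hull V. (x - u) \<bullet> (u - C') \<le> 0)"
      using uC uT by (simp add: perp_plane_supports_def)
    then obtain x where x: "x \<in> convex hull V" "(x - u) \<bullet> (u - C') > 0" by (auto simp: not_le)
    have "\<exists>y\<in>V. (y - u) \<bullet> (u - C') > 0"
    proof (rule ccontr)
      assume "\<not> ?thesis"
      then have "V \<subseteq> {x. (u - C') \<bullet> x \<le> (u - C') \<bullet> u}"
        by (auto simp: not_less inner_diff_left inner_commute)
      then have "convex hull V \<subseteq> {x. (u - C') \<bullet> x \<le> (u - C') \<bullet> u}"
        by (rule hull_minimal) (rule convex_halfspace_le)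
      then have "(u - C') \<bullet> x \<le> (u - C') \<bullet> u" using x(1) by blast
      moreover have "(x - u) \<bullet> (u - C') = (u - C') \<bullet> x - (u - C') \<bullet> u"
        using inner_diff_left[of x u "u - C'"] inner_commute[of x "u - C'"] inner_commute[of u "u - C'"] by linarith
      ultimately show False using x(2) by linarith
    qed
    then obtain y where y: "y \<in> V" "(y - u) \<bullet> (u - C') > 0" by blast
    have "\<exists>z\<in>V. (y - u) \<bullet> (u - z) > 0"
    proof (rule ccontr)
      assume "\<not> ?thesis"
      then have "V \<subseteq> {z. (y - u) \<bullet> z \<ge> (y - u) \<bullet> u}"
        by (auto simp: not_less inner_diff_right)
      then have "convex hull V \<subseteq> {z. (y - u) \<bullet> z \<ge> (y - u) \<bullet> u}"
        by (rule hull_minimal) (rule convex_halfspace_ge)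
      then show False using y CT by (auto simp: inner_diff_right)
    qed
    then obtain z where z: "z \<in> V" "(y - u) \<bullet> (u - z) > 0" by blast
    have "y \<noteq> u" using y by auto
    moreover have "z \<noteq> u" using z by auto
    moreover have "(y - u) \<bullet> (z - u) < 0"
    proof -
      have "(y - u) \<bullet> (z - u) = - ((y - u) \<bullet> (u - z))"
        by (metis inner_minus_right minus_diff_eq)
      then show ?thesis using z by simp
    qed
    ultimately show "\<exists>y\<in>V. \<exists>z\<in>V. y \<noteq> u \<and> z \<noteq> u \<and> (y - u) \<bullet> (z - u) < 0" using y z by blast
  qed
  then show ?thesis by blast
qed

definition acute_at :: "(real^3) set \<Rightarrow> real^3 \<Rightarrow> bool" where
  "acute_at V b \<longleftrightarrow> (\<forall>y\<in>V. \<forall>z\<in>V. y \<noteq> b \<longrightarrow> z \<noteq> b \<longrightarrow> y \<noteq> z \<longrightarrow> (y - b) \<bullet> (z - b) > 0)"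

lemma acute_atI:
  assumes "V = {a,b,c,d}" "a \<noteq> b" "a \<noteq> c" "a \<noteq> d" "b \<noteq> c" "b \<noteq> d" "c \<noteq> d"
    and "(a - b) \<bullet> (c - b) > 0 \<and> (a - b) \<bullet> (d - b) > 0 \<and> (c - b) \<bullet> (d - b) > 0"
  shows "acute_at V b"
  using assms unfolding acute_at_def by (auto simp: inner_commute)

lemma four_eq:
  assumes "finite V" "card V = 4" "a \<in> V" "b \<in> V" "c \<in> V" "d \<in> V"
    "a \<noteq> b" "a \<noteq> c" "a \<noteq> d" "b \<noteq> c" "b \<noteq> d" "c \<noteq> d"
  shows "V = {a,b,c,d}"
proof -
  have "{a,b,c,d} \<subseteq> V" using assms by auto
  moreover have "card {a,b,c,d} = card V" using assms by simp
  ultimately show ?thesis using assms(1) by (metis card_subset_eq)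
qed

context tetra
begin

lemma facet_face: "u \<in> V \<Longrightarrow> convex hull (V - {u}) face_of convex hull V"
  using face_of_convex_hull_affine_independent[OF indep] by blast

lemma facet_dim: assumes "u \<in> V" shows "aff_dim (convex hull (V - {u})) = 2"
proof -
  have "\<not> affine_dependent (V - {u})" using indep by (simp add: affine_independent_Diff)
  then have "int (card (V - {u})) = aff_dim (V - {u}) + 1" by (rule aff_dim_affine_independent)
  moreover have "card (V - {u}) = 3" using card4 fin assms by simp
  ultimately show ?thesis by (simp add: aff_dim_convex_hull)
qed

lemma facet_inj: assumes "u \<in> V" "u' \<in> V" "u \<noteq> u'"
  shows "convex hull (V - {u}) \<noteq> convex hull (V - {u'})"
proof
  assume eq: "convex hull (V - {u}) = convex hull (V - {u'})"
  have "u \<in> convex hull (V - {u'})" using assms by (simp add: hull_inc)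
  then have "lam g u u = 0" using eq lam_facet assms by auto
  moreover have "lam g u u = 1" using lam_vert assms by simp
  ultimately show False by simp
qed

lemma stable_acute:
  assumes ms: "monostable (convex hull V) C"
  shows "\<exists>b\<in>V. \<exists>c\<in>V. b \<noteq> c \<and> acute_at V b \<and> acute_at V c"
proof -
  have Ci: "C \<in> interior (convex hull V)" using ms by (simp add: monostable_def weighted_polyhedron_def)
  obtain F where uniq: "\<And>F'. F' face_of convex hull V \<and> aff_dim F' = 2 \<and> equilibrium_on (convex hull V) C F' \<Longrightarrow> F' = F"
    using ms unfolding monostable_def by metis
  define hh where "hh y = lam g y C / norm (g y)" for y
  have down: "\<exists>w\<in>V. w \<noteq> u \<and> g u \<bullet> g w > 0 \<and> hh w < hh u"
    if u: "u \<in> V" "convex hull (V - {u}) \<noteq> F" for u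
  proof -
    have "\<not> equilibrium_on (convex hull V) C (convex hull (V - {u}))"
      using uniq[of "convex hull (V - {u})"] facet_face[OF u(1)] facet_dim[OF u(1)] u(2) by blast
    then show ?thesis using NS[OF Ci u(1)] by (simp add: hh_def)
  qed
  obtain r where r: "r \<in> V" "\<And>u. u \<in> V \<Longrightarrow> u \<noteq> r \<Longrightarrow> convex hull (V - {u}) \<noteq> F"
  proof (cases "\<exists>u\<in>V. convex hull (V - {u}) = F")
    case True
    then obtain r where "r \<in> V" "convex hull (V - {r}) = F" by blast
    then show ?thesis using that facet_inj by metis
  next
    case False
    obtain r where "r \<in> V" using card4 by (metis card.empty ex_in_conv zero_neq_numeral)
    then show ?thesis using that False by blast
  qed
  have "card (V - {r}) = 3" using card4 fin r(1) by simp
  then obtain x y z where xyz: "V - {r} = {x,y,z}" "x \<noteq> y" "y \<noteq> z" "x \<noteq> z" by (auto simp: card_3_iff)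
  have Veq: "V = {r,x,y,z}" using xyz(1) r(1) by auto
  have dist: "r \<noteq> x" "r \<noteq> y" "r \<noteq> z" using xyz(1) by auto
  have inV: "x \<in> V" "y \<in> V" "z \<in> V" using Veq by auto
  have dx: "\<exists>w\<in>{r,x,y,z}. w \<noteq> x \<and> g x \<bullet> g w > 0 \<and> hh w < hh x"
    using down[of x] r(2)[of x] inV dist Veq by auto
  have dy: "\<exists>w\<in>{r,x,y,z}. w \<noteq> y \<and> g y \<bullet> g w > 0 \<and> hh w < hh y"
    using down[of y] r(2)[of y] inV dist Veq by auto
  have dz: "\<exists>w\<in>{r,x,y,z}. w \<noteq> z \<and> g z \<bullet> g w > 0 \<and> hh w < hh z"
    using down[of z] r(2)[of z] inV dist Veq by auto
  have sym: "\<And>p q. g p \<bullet> g q > 0 \<Longrightarrow> g q \<bullet> g p > 0" by (simp add: inner_commute)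
  note cb = comb[where Ob = "\<lambda>p q. g p \<bullet> g q > 0" and h = hh, OF dist xyz(2) xyz(4) xyz(3) sym dx dy dz]
  show ?thesis
  proof (rule disjE[OF cb])
    assume "\<exists>a b c d. a \<in> {r,x,y,z} \<and> b \<in> {r,x,y,z} \<and> c \<in> {r,x,y,z} \<and> d \<in> {r,x,y,z} \<and>
           a \<noteq> b \<and> a \<noteq> c \<and> a \<noteq> d \<and> b \<noteq> c \<and> b \<noteq> d \<and> c \<noteq> d \<and> g a \<bullet> g b > 0 \<and> g a \<bullet> g c > 0 \<and> g a \<bullet> g d > 0"
    then obtain a b c d where H: "a \<in> V" "b \<in> V" "c \<in> V" "d \<in> V"
      "a \<noteq> b" "a \<noteq> c" "a \<noteq> d" "b \<noteq> c" "b \<noteq> d" "c \<noteq> d" "g a \<bullet> g b > 0" "g a \<bullet> g c > 0" "g a \<bullet> g d > 0"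
      unfolding Veq by blast
    have "V = {a,b,c,d}" using four_eq[OF fin card4 H(1-10)] .
    then show ?thesis using star H(5-13) by blast
  next
    assume "\<exists>a b c d. a \<in> {r,x,y,z} \<and> b \<in> {r,x,y,z} \<and> c \<in> {r,x,y,z} \<and> d \<in> {r,x,y,z} \<and>
           a \<noteq> b \<and> a \<noteq> c \<and> a \<noteq> d \<and> b \<noteq> c \<and> b \<noteq> d \<and> c \<noteq> d \<and> g b \<bullet> g a > 0 \<and> g b \<bullet> g c > 0 \<and> g c \<bullet> g d > 0"
    then obtain a b c d where H: "a \<in> V" "b \<in> V" "c \<in> V" "d \<in> V"
      "a \<noteq> b" "a \<noteq> c" "a \<noteq> d" "b \<noteq> c" "b \<noteq> d" "c \<noteq> d" "g b \<bullet> g a > 0" "g b \<bullet> g c > 0" "g c \<bullet> g d > 0"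
      unfolding Veq by blast
    have V4: "V = {a,b,c,d}" using four_eq[OF fin card4 H(1-10)] .
    have V4': "V = {d,c,b,a}" using V4 by auto
    have ab: "acute_at V b"
      using acute[OF V4 H(5-13)] by (rule acute_atI[OF V4 H(5-10)])
    have "g c \<bullet> g b > 0" using H(12) by (simp add: inner_commute)
    then have "(d - c) \<bullet> (b - c) > 0 \<and> (d - c) \<bullet> (a - c) > 0 \<and> (b - c) \<bullet> (a - c) > 0"
      using acute[OF V4', of] H(5-13) by (simp add: inner_commute) 
    then have ac: "acute_at V c"
      using H(5-10) by (intro acute_atI[OF V4']) auto
    show ?thesis using ab ac H(2,3,8) by blast
  qed
qed

end

theorem theorem1p7:
  fixes T :: "(real^3) set"
  assumes "3 simplex T"
  shows "\<not> (\<exists>C C'. C \<in> interior T \<and> C' \<in> interior T \<and> monostable T C \<and> mono_unstable T C')"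
proof
  assume "\<exists>C C'. C \<in> interior T \<and> C' \<in> interior T \<and> monostable T C \<and> mono_unstable T C'"
  then obtain C C' where ms: "monostable T C" and mu: "mono_unstable T C'" by blast
  obtain V where V: "\<not> affine_dependent V" "int (card V) = 3 + 1" "T = convex hull V"
    using assms unfolding simplex_def by blast
  have c4: "card V = 4" using V(2) by simp
  then have fin: "finite V" by (metis card.infinite zero_neq_numeral)
  obtain p1 where p1: "p1 \<in> V" using c4 by (metis card.empty ex_in_conv zero_neq_numeral)
  have "card (V - {p1}) = 3" using c4 fin p1 by simp
  then obtain p2 p3 p4 where p: "V - {p1} = {p2,p3,p4}" "p2 \<noteq> p3" "p3 \<noteq> p4" "p2 \<noteq> p4" by (auto simp: card_3_iff)
  have Veq: "V = {p1,p2,p3,p4}" using p(1) p1 by auto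
  have d1: "p1 \<noteq> p2" "p1 \<noteq> p3" "p1 \<noteq> p4" using p(1) by auto
  obtain g where tg: "tetra {p1,p2,p3,p4} g"
    using tetra_exists[OF d1 p(2) p(4) p(3)] V(1) Veq by auto
  then have tV: "tetra V g" using Veq by simp
  obtain b c where bc: "b \<in> V" "c \<in> V" "b \<noteq> c" "acute_at V b" "acute_at V c"
    using tetra.stable_acute[OF tV] ms V(3) by blast
  obtain v0 where v0: "\<forall>u\<in>V. u \<noteq> v0 \<longrightarrow> (\<exists>y\<in>V. \<exists>z\<in>V. y \<noteq> u \<and> z \<noteq> u \<and> (y - u) \<bullet> (z - u) < 0)"
    using unstable_obtuse[OF V(1)] mu V(3) by blast
  obtain u where u: "u \<in> V" "u \<noteq> v0" "acute_at V u" using bc by metis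
  then obtain y z where yz: "y \<in> V" "z \<in> V" "y \<noteq> u" "z \<noteq> u" "(y - u) \<bullet> (z - u) < 0" using v0 by blast
  show False
  proof (cases "y = z")
    case True
    from yz(5) True have "(y - u) \<bullet> (y - u) < 0" by simp
    then show False using inner_ge_zero[of "y - u"] by linarith
  next
    case False
    then show False using u(3) yz unfolding acute_at_def by force
  qed
qed

end
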